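(* Let $m\ge 1$ and let $\alpha_0,\dots,\alpha_{m-1},\beta_0,\dots,\beta_{m-1}$ be real numbers. Consider the element \[ P=\sum_{k=0}^{m-1}\alpha_kx^k+\sum_{k=0}^{m-1}\beta_k\,yx^k \] both in $\mathbb{C}[\mathbb{Z}/m\mathbb{Z}\times\mathbb{Z}/2\mathbb{Z}]$, where $\mathbb{Z}/m\mathbb{Z}\times\mathbb{Z}/2\mathbb{Z}=\langle x,y\mid x^m,y^2,[x,y]\rangle$, and in $\mathbb{C}[D_m]$, where $D_m=\langle x,y\mid x^m,y^2,yxyx\rangle$ (same coefficients, same words). Assume $P$ is reciprocal in $\mathbb{C}[\mathbb{Z}/m\mathbb{Z}\times\mathbb{Z}/2\mathbb{Z}]$ (then it is also reciprocal in $\mathbb{C}[D_m]$). Let $k=\sum_k(|\alpha_k|+|\beta_k|)$ and $|\lambda|<1/k$. Then \[ m_{\mathbb{Z}/m\mathbb{Z}\times\mathbb{Z}/2\mathbb{Z}}(P,\lambda)=m_{D_m}(P,\lambda). \]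
   Context: For a group $\Gamma$ and $Q=\sum_{g\in\Gamma}c_g g\in\mathbb{C}\Gamma$ (finite sum), the reciprocal is $Q^*=\sum_g\overline{c_g}\,g^{-1}$, and $Q$ is reciprocal if $Q=Q^*$. For reciprocal $P\in\mathbb{C}\Gamma$ with $l_1$-norm $k=\sum_g|c_g|$ and $|\lambda|<1/k$, define $m_\Gamma(P,\lambda)=-\sum_{n\ge1}a_n\lambda^n/n$, where $a_n$ is the coefficient of the identity element of $\Gamma$ in $P^n$. *)

theory Defs
  imports "HOL-Analysis.Analysis" "HOL-Algebra.Group"
begin

text \<open>An element of the complex group algebra C[Gamma] is a finitely supported function
  Q : carrier G -> complex (the coefficient function, Q g = c_g).\<close>

definition ga_supp :: "('g, 'b) monoid_scheme \<Rightarrow> ('g \<Rightarrow> complex) \<Rightarrow> 'g set" where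
  "ga_supp G Q = {g \<in> carrier G. Q g \<noteq> 0}"

definition ga_elem :: "('g, 'b) monoid_scheme \<Rightarrow> ('g \<Rightarrow> complex) \<Rightarrow> bool" where
  "ga_elem G Q \<longleftrightarrow> finite (ga_supp G Q) \<and> (\<forall>g. g \<notin> carrier G \<longrightarrow> Q g = 0)"

definition ga_mult :: "('g, 'b) monoid_scheme \<Rightarrow> ('g \<Rightarrow> complex) \<Rightarrow> ('g \<Rightarrow> complex) \<Rightarrow> 'g \<Rightarrow> complex" where
  "ga_mult G P Q = (\<lambda>g. if g \<in> carrier G then
      (\<Sum>h\<in>ga_supp G P. P h * Q (inv\<^bsub>G\<^esub> h \<otimes>\<^bsub>G\<^esub> g)) else 0)"

definition ga_one :: "('g, 'b) monoid_scheme \<Rightarrow> 'g \<Rightarrow> complex" where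
  "ga_one G = (\<lambda>g. if g = \<one>\<^bsub>G\<^esub> then 1 else 0)"

fun ga_pow :: "('g, 'b) monoid_scheme \<Rightarrow> ('g \<Rightarrow> complex) \<Rightarrow> nat \<Rightarrow> 'g \<Rightarrow> complex" where
  "ga_pow G P 0 = ga_one G"
| "ga_pow G P (Suc n) = ga_mult G (ga_pow G P n) P"

definition ga_star :: "('g, 'b) monoid_scheme \<Rightarrow> ('g \<Rightarrow> complex) \<Rightarrow> 'g \<Rightarrow> complex" where
  "ga_star G Q = (\<lambda>g. if g \<in> carrier G then cnj (Q (inv\<^bsub>G\<^esub> g)) else 0)"

definition ga_reciprocal :: "('g, 'b) monoid_scheme \<Rightarrow> ('g \<Rightarrow> complex) \<Rightarrow> bool" where
  "ga_reciprocal G Q \<longleftrightarrow> Q = ga_star G Q"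

definition ga_l1norm :: "('g, 'b) monoid_scheme \<Rightarrow> ('g \<Rightarrow> complex) \<Rightarrow> real" where
  "ga_l1norm G Q = (\<Sum>g\<in>ga_supp G Q. cmod (Q g))"

definition ga_trace_coeff :: "('g, 'b) monoid_scheme \<Rightarrow> ('g \<Rightarrow> complex) \<Rightarrow> nat \<Rightarrow> complex" where
  "ga_trace_coeff G P n = ga_pow G P n \<one>\<^bsub>G\<^esub>"

definition mahler_m :: "('g, 'b) monoid_scheme \<Rightarrow> ('g \<Rightarrow> complex) \<Rightarrow> complex \<Rightarrow> complex" where
  "mahler_m G P z = - (\<Sum>n. ga_trace_coeff G P (Suc n) * z ^ Suc n / of_nat (Suc n))"

text \<open>Elements are pairs (a, b) with a in {0..<m}, b :: bool, standing for the word
  y^b x^a.  Group laws are the normal forms from the presentations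
  Z/m x Z/2 = <x,y | x^m, y^2, [x,y]> and D_m = <x,y | x^m, y^2, yxyx>.\<close>

definition cyc_times_C2 :: "nat \<Rightarrow> (nat \<times> bool) monoid" where
  "cyc_times_C2 m = \<lparr> carrier = {0..<m} \<times> UNIV,
     mult = (\<lambda>(a, b) (c, d). ((a + c) mod m, b \<noteq> d)),
     one = (0, False) \<rparr>"

text \<open>In D_m: (y^b x^a)(y^d x^c) = y^(b+d) x^(s a + c), s = -1 if d = 1 else 1,
  since y x^a y = x^(-a).\<close>
definition dihedral :: "nat \<Rightarrow> (nat \<times> bool) monoid" where
  "dihedral m = \<lparr> carrier = {0..<m} \<times> UNIV,
     mult = (\<lambda>(a, b) (c, d). ((if d then (m - a) + c else a + c) mod m, b \<noteq> d)),
     one = (0, False) \<rparr>"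

text \<open>The element P = sum_k alpha_k x^k + sum_k beta_k y x^k, with x^k = (k, False)
  and y x^k = (k, True).\<close>
definition P_elem :: "nat \<Rightarrow> (nat \<Rightarrow> real) \<Rightarrow> (nat \<Rightarrow> real) \<Rightarrow> nat \<times> bool \<Rightarrow> complex" where
  "P_elem m \<alpha> \<beta> = (\<lambda>(a, b). if a < m then complex_of_real (if b then \<beta> a else \<alpha> a) else 0)"

end

theory Submission
  imports Defs
begin

lemma modz: "a<m \<Longrightarrow> c<(m::nat) \<Longrightarrow> (a+c) mod m = 0 \<Longrightarrow> c = (m-a) mod m"
proof -
  assume h: "a<m" "c<m" "(a+c) mod m = 0"
  then obtain k where k: "a + c = m * k" by (metis mod_0_imp_dvd dvd_def)
  have "m * k < m * 2" using h k by linarith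
  then have "k < 2" by simp
  then have "k = 0 \<or> k = 1" by auto
  then show ?thesis using h k by (auto simp: mod_if)
qed

lemma modz2: "a<m \<Longrightarrow> c<(m::nat) \<Longrightarrow> (m-a+c) mod m = 0 \<Longrightarrow> c = a"
proof -
  assume h: "a<m" "c<m" "(m-a+c) mod m = 0"
  then obtain k where k: "m - a + c = m * k" by (metis mod_0_imp_dvd dvd_def)
  have "m * k < m * 2" using h k by linarith
  then have "k < 2" by simp
  then have "k = 0 \<or> k = 1" by auto
  then show ?thesis using h k by auto
qed

definition negm :: "nat \<Rightarrow> nat \<Rightarrow> nat" where "negm m a = (m - a) mod m"

lemma negm_lt: "0 < m \<Longrightarrow> negm m a < m" by (simp add: negm_def)

lemma negm_negm: "a < m \<Longrightarrow> negm m (negm m a) = a"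
  unfolding negm_def by (cases "a = 0") simp_all

lemma addneg1: "a < m \<Longrightarrow> (a + negm m a) mod m = 0"
  unfolding negm_def by (cases "a = 0") simp_all

lemma addneg2: "a < m \<Longrightarrow> (negm m a + a) mod m = 0"
  using addneg1[of a m] by (simp add: add.commute)

lemma negm_bij: "0 < m \<Longrightarrow> bij_betw (negm m) {..<m} {..<m}"
  by (rule bij_betw_byWitness[where f'="negm m"]) (auto simp: negm_negm negm_lt)

lemma reindex: "0 < m \<Longrightarrow> (\<Sum>a<m. f (negm m a)) = (\<Sum>a<m. f a)"
  using sum.reindex_bij_betw[OF negm_bij, of m f] by simp

lemma cm: "(a, b) \<otimes>\<^bsub>cyc_times_C2 m\<^esub> (c, e) = ((a + c) mod m, b \<noteq> e)"
  by (simp add: cyc_times_C2_def)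
lemma dm: "(a, b) \<otimes>\<^bsub>dihedral m\<^esub> (c, e) = ((if e then m - a + c else a + c) mod m, b \<noteq> e)"
  by (simp add: dihedral_def)
lemma co: "\<one>\<^bsub>cyc_times_C2 m\<^esub> = (0, False)" by (simp add: cyc_times_C2_def)
lemma do: "\<one>\<^bsub>dihedral m\<^esub> = (0, False)" by (simp add: dihedral_def)
lemma cc: "(c, e) \<in> carrier (cyc_times_C2 m) \<longleftrightarrow> c < m" by (simp add: cyc_times_C2_def)
lemma dc: "(c, e) \<in> carrier (dihedral m) \<longleftrightarrow> c < m" by (simp add: dihedral_def)

lemma inv_cyc: "a < m \<Longrightarrow> inv\<^bsub>cyc_times_C2 m\<^esub> (a,b) = (negm m a, b)"
  unfolding m_inv_def
proof (rule the_equality)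
  assume a: "a < m"
  then have m: "0 < m" by simp
  show "(negm m a, b) \<in> carrier (cyc_times_C2 m) \<and>
     (a, b) \<otimes>\<^bsub>cyc_times_C2 m\<^esub> (negm m a, b) = \<one>\<^bsub>cyc_times_C2 m\<^esub> \<and>
     (negm m a, b) \<otimes>\<^bsub>cyc_times_C2 m\<^esub> (a, b) = \<one>\<^bsub>cyc_times_C2 m\<^esub>"
    unfolding cc cm co using addneg1[OF a] addneg2[OF a] negm_lt[OF m] by simp
next
  fix y assume a: "a < m" and H: "y \<in> carrier (cyc_times_C2 m) \<and>
     (a, b) \<otimes>\<^bsub>cyc_times_C2 m\<^esub> y = \<one>\<^bsub>cyc_times_C2 m\<^esub> \<and>
     y \<otimes>\<^bsub>cyc_times_C2 m\<^esub> (a, b) = \<one>\<^bsub>cyc_times_C2 m\<^esub>"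
  obtain c e where y: "y = (c, e)" by force
  have H1: "(c, e) \<in> carrier (cyc_times_C2 m)" and H2: "(a, b) \<otimes>\<^bsub>cyc_times_C2 m\<^esub> (c, e) = \<one>\<^bsub>cyc_times_C2 m\<^esub>"
    using H y by blast+
  have c: "c < m" using H1 unfolding cc .
  have "((a + c) mod m, b \<noteq> e) = (0, False)" using H2 unfolding cm co .
  then have "(a + c) mod m = 0" "e = b" by auto
  then show "y = (negm m a, b)" using a c y modz[OF a c] by (simp add: negm_def)
qed

lemma inv_dih_F: "a < m \<Longrightarrow> inv\<^bsub>dihedral m\<^esub> (a,False) = (negm m a, False)"
  unfolding m_inv_def
proof (rule the_equality)
  assume a: "a < m"
  then have m: "0 < m" by simp
  show "(negm m a, False) \<in> carrier (dihedral m) \<and>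
     (a, False) \<otimes>\<^bsub>dihedral m\<^esub> (negm m a, False) = \<one>\<^bsub>dihedral m\<^esub> \<and>
     (negm m a, False) \<otimes>\<^bsub>dihedral m\<^esub> (a, False) = \<one>\<^bsub>dihedral m\<^esub>"
    unfolding dc dm do using addneg1[OF a] addneg2[OF a] negm_lt[OF m] by simp
next
  fix y assume a: "a < m" and H: "y \<in> carrier (dihedral m) \<and>
     (a, False) \<otimes>\<^bsub>dihedral m\<^esub> y = \<one>\<^bsub>dihedral m\<^esub> \<and>
     y \<otimes>\<^bsub>dihedral m\<^esub> (a, False) = \<one>\<^bsub>dihedral m\<^esub>"
  obtain c e where y: "y = (c, e)" by force
  have H1: "(c, e) \<in> carrier (dihedral m)" and H2: "(a, False) \<otimes>\<^bsub>dihedral m\<^esub> (c, e) = \<one>\<^bsub>dihedral m\<^esub>"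
    using H y by blast+
  have c: "c < m" using H1 unfolding dc .
  have "((if e then m - a + c else a + c) mod m, False \<noteq> e) = (0, False)" using H2 unfolding dm do .
  then have "e = False" "(a + c) mod m = 0" by auto
  then show "y = (negm m a, False)" using a c y modz[OF a c] by (simp add: negm_def)
qed

lemma inv_dih_T: "a < m \<Longrightarrow> inv\<^bsub>dihedral m\<^esub> (a,True) = (a, True)"
  unfolding m_inv_def
proof (rule the_equality)
  assume a: "a < m"
  show "(a, True) \<in> carrier (dihedral m) \<and>
     (a, True) \<otimes>\<^bsub>dihedral m\<^esub> (a, True) = \<one>\<^bsub>dihedral m\<^esub> \<and>
     (a, True) \<otimes>\<^bsub>dihedral m\<^esub> (a, True) = \<one>\<^bsub>dihedral m\<^esub>"
    unfolding dc dm do using a by simp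
next
  fix y assume a: "a < m" and H: "y \<in> carrier (dihedral m) \<and>
     (a, True) \<otimes>\<^bsub>dihedral m\<^esub> y = \<one>\<^bsub>dihedral m\<^esub> \<and>
     y \<otimes>\<^bsub>dihedral m\<^esub> (a, True) = \<one>\<^bsub>dihedral m\<^esub>"
  obtain c e where y: "y = (c, e)" by force
  have H1: "(c, e) \<in> carrier (dihedral m)" and H2: "(a, True) \<otimes>\<^bsub>dihedral m\<^esub> (c, e) = \<one>\<^bsub>dihedral m\<^esub>"
    using H y by blast+
  have c: "c < m" using H1 unfolding dc .
  have "((if e then m - a + c else a + c) mod m, True \<noteq> e) = (0, False)" using H2 unfolding dm do .
  then have "e = True" "(m - a + c) mod m = 0" by auto
  then show "y = (a, True)" using a c y modz2[OF a c] by simp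
qed

lemma mult_sum:
  assumes "finite (carrier G)" "g \<in> carrier G"
  shows "ga_mult G Q P g = (\<Sum>h\<in>carrier G. Q h * P (inv\<^bsub>G\<^esub> h \<otimes>\<^bsub>G\<^esub> g))"
  unfolding ga_mult_def using assms
  by (auto intro!: sum.mono_neutral_left simp: ga_supp_def)

lemma sum_split: "(\<Sum>h\<in>{..<m} \<times> (UNIV::bool set). f h) = (\<Sum>a<m. f (a,False) + f (a,True))"
proof -
  have "(\<Sum>h\<in>{..<m} \<times> (UNIV::bool set). f h) = (\<Sum>(a,b)\<in>{..<m} \<times> (UNIV::bool set). f (a,b))" by simp
  also have "\<dots> = (\<Sum>a<m. \<Sum>b\<in>UNIV. f(a,b))" by (rule sum.cartesian_product[symmetric])
  also have "\<dots> = (\<Sum>a<m. f(a,False) + f(a,True))" by (rule sum.cong) (auto simp: UNIV_bool)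
  finally show ?thesis .
qed

lemma car_cyc: "carrier (cyc_times_C2 m) = {..<m} \<times> UNIV" by (simp add: cyc_times_C2_def atLeast0LessThan)
lemma car_dih: "carrier (dihedral m) = {..<m} \<times> UNIV" by (simp add: dihedral_def atLeast0LessThan)

lemma cyc_mult: assumes "c < m"
  shows "ga_mult (cyc_times_C2 m) Q P (c,d) = (\<Sum>a<m. Q(a,False) * P((negm m a + c) mod m, d)
     + Q(a,True) * P((negm m a + c) mod m, \<not>d))"
proof -
  have "ga_mult (cyc_times_C2 m) Q P (c,d) = (\<Sum>h\<in>{..<m} \<times> (UNIV::bool set). Q h * P (inv\<^bsub>cyc_times_C2 m\<^esub> h \<otimes>\<^bsub>cyc_times_C2 m\<^esub> (c,d)))"
    using mult_sum[of "cyc_times_C2 m" "(c,d)" Q P] assms by (simp add: car_cyc)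
  also have "\<dots> = (\<Sum>a<m. Q (a,False) * P (inv\<^bsub>cyc_times_C2 m\<^esub> (a,False) \<otimes>\<^bsub>cyc_times_C2 m\<^esub> (c,d))
      + Q (a,True) * P (inv\<^bsub>cyc_times_C2 m\<^esub> (a,True) \<otimes>\<^bsub>cyc_times_C2 m\<^esub> (c,d)))"
    by (rule sum_split)
  also have "\<dots> = (\<Sum>a<m. Q(a,False) * P((negm m a + c) mod m, d)
     + Q(a,True) * P((negm m a + c) mod m, \<not>d))"
    by (rule sum.cong) (simp, simp add: inv_cyc cm)
  finally show ?thesis .
qed

lemma dih_mult: assumes "c < m"
  shows "ga_mult (dihedral m) Q P (c,d) = (\<Sum>a<m. Q(a,False) * P((if d then m - negm m a + c else negm m a + c) mod m, d)
     + Q(a,True) * P((if d then m - a + c else a + c) mod m, \<not>d))"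
proof -
  have "ga_mult (dihedral m) Q P (c,d) = (\<Sum>h\<in>{..<m} \<times> (UNIV::bool set). Q h * P (inv\<^bsub>dihedral m\<^esub> h \<otimes>\<^bsub>dihedral m\<^esub> (c,d)))"
    using mult_sum[of "dihedral m" "(c,d)" Q P] assms by (simp add: car_dih)
  also have "\<dots> = (\<Sum>a<m. Q (a,False) * P (inv\<^bsub>dihedral m\<^esub> (a,False) \<otimes>\<^bsub>dihedral m\<^esub> (c,d))
      + Q (a,True) * P (inv\<^bsub>dihedral m\<^esub> (a,True) \<otimes>\<^bsub>dihedral m\<^esub> (c,d)))"
    by (rule sum_split)
  also have "\<dots> = (\<Sum>a<m. Q(a,False) * P((if d then m - negm m a + c else negm m a + c) mod m, d)
     + Q(a,True) * P((if d then m - a + c else a + c) mod m, \<not>d))"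
    by (rule sum.cong) (simp, simp add: inv_dih_F inv_dih_T dm)
  finally show ?thesis .
qed

definition symm :: "nat \<Rightarrow> (nat \<times> bool \<Rightarrow> complex) \<Rightarrow> bool" where
  "symm m Q \<longleftrightarrow> (\<forall>a<m. \<forall>e. Q (negm m a, e) = Q (a, e))"

lemma idx1: "a < m \<Longrightarrow> (m - a + c) mod m = (negm m a + c) mod m"
  by (simp add: negm_def mod_add_left_eq)

lemma idx1': "a < m \<Longrightarrow> (m + c - a) mod m = (negm m a + c) mod m"
  using idx1[of a m c] by simp

lemma step_eq:
  assumes m: "0 < m" and c: "c < m" and Q: "symm m Q"
  shows "ga_mult (cyc_times_C2 m) Q P (c,d) = ga_mult (dihedral m) Q P (c,d)"
proof -
  have QF: "Q (negm m a, e) = Q (a, e)" if "a < m" for a e using Q that by (simp add: symm_def)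
  have r1: "(\<Sum>a<m. Q(a,False) * P((m - negm m a + c) mod m, True)) = (\<Sum>a<m. Q(a,False) * P((negm m a + c) mod m, True))"
  proof -
    have "(\<Sum>a<m. Q(a,False) * P((m - negm m a + c) mod m, True)) = (\<Sum>a<m. Q(negm m a,False) * P((m - negm m (negm m a) + c) mod m, True))"
      using reindex[OF m, of "\<lambda>a. Q(a,False) * P((m - negm m a + c) mod m, True)"] by simp
    also have "\<dots> = (\<Sum>a<m. Q(a,False) * P((negm m a + c) mod m, True))"
      by (rule sum.cong) (auto simp: QF negm_negm idx1 idx1')
    finally show ?thesis .
  qed
  have r2: "(\<Sum>a<m. Q(a,True) * P((a + c) mod m, True)) = (\<Sum>a<m. Q(a,True) * P((negm m a + c) mod m, True))"
  proof -
    have "(\<Sum>a<m. Q(a,True) * P((a + c) mod m, True)) = (\<Sum>a<m. Q(negm m a,True) * P((negm m a + c) mod m, True))"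
      using reindex[OF m, of "\<lambda>a. Q(a,True) * P((a + c) mod m, True)"] by simp
    also have "\<dots> = (\<Sum>a<m. Q(a,True) * P((negm m a + c) mod m, True))"
      by (rule sum.cong) (auto simp: QF)
    finally show ?thesis .
  qed
  have r3: "(\<Sum>a<m. Q(a,True) * P((m + c - a) mod m, False)) = (\<Sum>a<m. Q(a,True) * P((negm m a + c) mod m, False))"
    by (rule sum.cong) (auto simp: idx1 idx1')
  show ?thesis
    unfolding cyc_mult[OF c] dih_mult[OF c]
    by (cases d) (simp_all add: sum.distrib r1 r2 r3)
qed

lemma idx2: "a < m \<Longrightarrow> c < m \<Longrightarrow> (a + negm m c) mod m = negm m ((negm m a + c) mod m)"
  unfolding negm_def by (cases "a = 0"; cases "c = 0"; auto simp: mod_if)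

lemma step_symm:
  assumes m: "0 < m" and Q: "symm m Q" and P: "symm m P"
  shows "symm m (ga_mult (cyc_times_C2 m) Q P)"
  unfolding symm_def
proof (intro allI impI)
  fix c e assume c: "c < m"
  have QF: "Q (negm m a, e) = Q (a, e)" if "a < m" for a e using Q that by (simp add: symm_def)
  have PF: "P (negm m a, e) = P (a, e)" if "a < m" for a e using P that by (simp add: symm_def)
  let ?f = "\<lambda>a. Q(a,False) * P((negm m a + negm m c) mod m, e) + Q(a,True) * P((negm m a + negm m c) mod m, \<not>e)"
  have "ga_mult (cyc_times_C2 m) Q P (negm m c, e) = (\<Sum>a<m. ?f a)"
    by (rule cyc_mult[OF negm_lt[OF m]])
  also have "\<dots> = (\<Sum>a<m. ?f (negm m a))" by (rule reindex[OF m, symmetric])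
  also have "\<dots> = (\<Sum>a<m. Q(a,False) * P((negm m a + c) mod m, e) + Q(a,True) * P((negm m a + c) mod m, \<not>e))"
  proof (rule sum.cong)
    fix a assume "a \<in> {..<m}"
    then have a: "a < m" by simp
    have lt: "(negm m a + c) mod m < m" using m by simp
    show "?f (negm m a) = Q(a,False) * P((negm m a + c) mod m, e) + Q(a,True) * P((negm m a + c) mod m, \<not>e)"
      using QF[OF a] negm_negm[OF a] idx2[OF a c] PF[OF lt] by simp
  qed simp
  also have "\<dots> = ga_mult (cyc_times_C2 m) Q P (c, e)" by (rule cyc_mult[OF c, symmetric])
  finally show "ga_mult (cyc_times_C2 m) Q P (negm m c, e) = ga_mult (cyc_times_C2 m) Q P (c, e)" .
qed

lemma P_symm:
  assumes m: "0 < m" and R: "ga_reciprocal (cyc_times_C2 m) (P_elem m \<alpha> \<beta>)"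
  shows "symm m (P_elem m \<alpha> \<beta>)"
  unfolding symm_def
proof (intro allI impI)
  fix a e assume a: "a < m"
  have "P_elem m \<alpha> \<beta> (a, e) = ga_star (cyc_times_C2 m) (P_elem m \<alpha> \<beta>) (a, e)"
    using R unfolding ga_reciprocal_def by metis
  also have "\<dots> = cnj (P_elem m \<alpha> \<beta> (negm m a, e))"
    using a by (simp add: ga_star_def car_cyc inv_cyc)
  also have "\<dots> = P_elem m \<alpha> \<beta> (negm m a, e)"
    by (simp add: P_elem_def)
  finally show "P_elem m \<alpha> \<beta> (negm m a, e) = P_elem m \<alpha> \<beta> (a, e)" by simp
qed

lemma pow_eq:
  assumes m: "0 < m" and P: "symm m P"
  shows "ga_pow (cyc_times_C2 m) P n = ga_pow (dihedral m) P n \<and> symm m (ga_pow (cyc_times_C2 m) P n)"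
proof (induction n)
  case 0
  have "ga_one (cyc_times_C2 m) = ga_one (dihedral m)"
    by (simp add: ga_one_def cyc_times_C2_def dihedral_def)
  moreover have "symm m (ga_one (cyc_times_C2 m))"
    unfolding symm_def ga_one_def using m
    by (auto simp: cyc_times_C2_def negm_def mod_if)
  ultimately show ?case by simp
next
  case (Suc n)
  let ?Q = "ga_pow (cyc_times_C2 m) P n"
  have sq: "symm m ?Q" using Suc.IH by (rule conjunct2)
  have "ga_mult (cyc_times_C2 m) ?Q P = ga_mult (dihedral m) ?Q P"
  proof
    fix g :: "nat \<times> bool"
    obtain c d where g: "g = (c, d)" by force
    show "ga_mult (cyc_times_C2 m) ?Q P g = ga_mult (dihedral m) ?Q P g"
    proof (cases "c < m")
      case True
      show ?thesis unfolding g by (rule step_eq[OF m True sq])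
    next
      case False
      then show ?thesis using g by (simp add: ga_mult_def car_cyc car_dih)
    qed
  qed
  then have e: "ga_pow (cyc_times_C2 m) P (Suc n) = ga_pow (dihedral m) P (Suc n)"
    using Suc.IH[THEN conjunct1] by (metis ga_pow.simps(2))
  have s: "symm m (ga_pow (cyc_times_C2 m) P (Suc n))"
    unfolding ga_pow.simps by (rule step_symm[OF m sq P])
  show ?case using e s by blast
qed

theorem theorem7p2:
  fixes m :: nat and \<alpha> \<beta> :: "nat \<Rightarrow> real" and lam :: complex
  assumes "m \<ge> 1"
    and "ga_reciprocal (cyc_times_C2 m) (P_elem m \<alpha> \<beta>)"
    and "cmod lam * (\<Sum>k<m. \<bar>\<alpha> k\<bar> + \<bar>\<beta> k\<bar>) < 1"
  shows "mahler_m (cyc_times_C2 m) (P_elem m \<alpha> \<beta>) lam = mahler_m (dihedral m) (P_elem m \<alpha> \<beta>) lam"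
proof -
  have m: "0 < m" using assms(1) by simp
  have "ga_trace_coeff (cyc_times_C2 m) (P_elem m \<alpha> \<beta>) n = ga_trace_coeff (dihedral m) (P_elem m \<alpha> \<beta>) n" for n
    using pow_eq[OF m P_symm[OF m assms(2)], of n]
    by (simp add: ga_trace_coeff_def cyc_times_C2_def dihedral_def)
  then show ?thesis by (simp add: mahler_m_def)
qed

end
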